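(* Let $N,K$ be positive integers, $X=\sum_{i=1}^NX_i$, and let $\psi$ be a unit vector on $N$ qubits supported on a set of at most $n_0$ computational basis states. Then $$\langle\psi|(X/N)^{2K}|\psi\rangle\le\prod_{i=0}^{K-1}\tau\Bigl(\frac{\log(n_0)+(i+1/2)\log(N)+1}{N}\Bigr)^2,$$ and consequently $$\bigl|(X/N)^K|\psi\rangle\bigr|\le\tau\Bigl(\frac{\log(n_0)}{N}+\frac{(K+1/2)\log(N)+1}{N}\Bigr)^K,$$ whenever the arguments of $\tau$ lie in $[0,1]$.
   Context: Logarithms are base 2. $S(x)=-x\log x-(1-x)\log(1-x)$ is the binary entropy function and $\tau(\sigma)=2\sqrt{S^{-1}(\sigma)(1-S^{-1}(\sigma))}$ for $\sigma\in[0,1]$ (the value does not depend on the choice of branch of $S^{-1}$); $\tau$ is continuous and increasing from $[0,1]$ onto $[0,1]$. *)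

theory Defs
  imports Complex_Main
begin

text \<open>Binary entropy, logarithms base 2 (note: in Isabelle log 2 0 = 0, so 0 log 0 = 0).\<close>
definition bin_entropy :: "real \<Rightarrow> real" where
  "bin_entropy x = - x * log 2 x - (1 - x) * log 2 (1 - x)"

definition bin_entropy_inv :: "real \<Rightarrow> real" where
  "bin_entropy_inv \<sigma> = (THE p. 0 \<le> p \<and> p \<le> 1/2 \<and> bin_entropy p = \<sigma>)"

definition tau :: "real \<Rightarrow> real" where
  "tau \<sigma> = 2 * sqrt (bin_entropy_inv \<sigma> * (1 - bin_entropy_inv \<sigma>))"

text \<open>States on N qubits: functions from computational basis states (bitstrings, encoded as
  subsets of {..<N}) to complex amplitudes; only values on Pow {..<N} matter.\<close>
type_synonym qstate = "nat set \<Rightarrow> complex"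

definition basis :: "nat \<Rightarrow> nat set set" where
  "basis N = Pow {..<N}"

text \<open>X = sum of Pauli X_i, X_i flips bit i.\<close>
definition Xop :: "nat \<Rightarrow> qstate \<Rightarrow> qstate" where
  "Xop N f = (\<lambda>S. \<Sum>i<N. f (S - {i} \<union> ({i} - S)))"

definition XN :: "nat \<Rightarrow> qstate \<Rightarrow> qstate" where
  "XN N f = (\<lambda>S. Xop N f S / of_nat N)"

definition qinner :: "nat \<Rightarrow> qstate \<Rightarrow> qstate \<Rightarrow> complex" where
  "qinner N f g = (\<Sum>S\<in>basis N. cnj (f S) * g S)"

definition qnorm :: "nat \<Rightarrow> qstate \<Rightarrow> real" where
  "qnorm N f = sqrt (\<Sum>S\<in>basis N. (cmod (f S))\<^sup>2)"

definition qsupport :: "nat \<Rightarrow> qstate \<Rightarrow> nat set set" where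
  "qsupport N f = {S \<in> basis N. f S \<noteq> 0}"

end

theory Submission
  imports Defs "HOL-Real_Asymp.Real_Asymp"
begin

lemma xlnx_cont: "continuous_on {0..} (\<lambda>x::real. x * ln x)"
proof -
  have lim: "((\<lambda>x::real. x * ln x) \<longlongrightarrow> 0) (at_right 0)" by real_asymp
  have "continuous (at x within {0..}) (\<lambda>x::real. x * ln x)" if x: "x \<in> {0..}" for x
  proof (cases "x = 0")
    case True
    have "at (0::real) within {0..} = at_right 0"
      by (simp add: at_within_Ici_at_right)
    then show ?thesis using True lim by (simp add: continuous_within)
  next
    case False
    then have "x > 0" using x by auto
    then have "isCont (\<lambda>x. x * ln x) x" by (auto intro!: continuous_intros)
    then show ?thesis using continuous_at_imp_continuous_at_within by blast
  qed
  then show ?thesis by (simp add: continuous_on_eq_continuous_within)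
qed

lemma bin_entropy_ln: "bin_entropy x = (- (x * ln x) - (1 - x) * ln (1 - x)) / ln 2"
  by (simp add: bin_entropy_def log_def field_simps)

lemma h_cont: "continuous_on {0..1} bin_entropy"
proof -
  have a: "continuous_on {0..1} (\<lambda>x::real. x * ln x)"
    using xlnx_cont by (rule continuous_on_subset) auto
  have b: "continuous_on {0..1} (\<lambda>x::real. (1 - x) * ln (1 - x))"
  proof (rule continuous_on_compose2[OF xlnx_cont, of "{0..1}" "\<lambda>x. 1 - x"])
    show "continuous_on {0..1} (\<lambda>x::real. 1 - x)" by (intro continuous_intros)
  qed auto
  show ?thesis unfolding bin_entropy_ln[abs_def]
    by (intro continuous_intros a b) auto
qed

lemma h_deriv: assumes "0 < x" "x < 1"
  shows "(bin_entropy has_real_derivative (ln (1 - x) - ln x) / ln 2) (at x)"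
proof -
  have "((\<lambda>x. (- (x * ln x) - (1 - x) * ln (1 - x)) / ln 2) has_real_derivative
       (- (1 * ln x + x * (1/x)) - ((-1) * ln (1 - x) + (1 - x) * (- 1 / (1 - x)))) / ln 2) (at x)"
    using assms by (auto intro!: derivative_eq_intros)
  moreover have "(- (1 * ln x + x * (1/x)) - ((-1) * ln (1 - x) + (1 - x) * (- 1 / (1 - x)))) / ln 2
     = (ln (1 - x) - ln x) / ln 2" using assms by (simp add: field_simps)
  ultimately show ?thesis unfolding bin_entropy_ln[abs_def] by simp
qed

lemma h_0[simp]: "bin_entropy 0 = 0" by (simp add: bin_entropy_def)
lemma h_half: "bin_entropy (1/2) = 1" by (simp add: bin_entropy_def log_divide)
lemma h_sym: "bin_entropy (1 - x) = bin_entropy x" by (simp add: bin_entropy_def algebra_simps)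

lemma h_strict: assumes "0 \<le> a" "a < b" "b \<le> 1/2" shows "bin_entropy a < bin_entropy b"
proof (rule DERIV_pos_imp_increasing_open[OF assms(2)])
  fix x assume x: "a < x" "x < b"
  then have "ln x < ln (1 - x)" using assms by simp
  then show "\<exists>y. DERIV bin_entropy x :> y \<and> 0 < y"
    using h_deriv[of x] x assms by (intro exI[of _ "(ln (1 - x) - ln x) / ln 2"]) auto
next
  show "continuous_on {a..b} bin_entropy" using h_cont by (rule continuous_on_subset) (use assms in auto)
qed

lemma inv_props: assumes "0 \<le> s" "s \<le> 1"
  shows "0 \<le> bin_entropy_inv s \<and> bin_entropy_inv s \<le> 1/2 \<and> bin_entropy (bin_entropy_inv s) = s"
proof -
  have ex: "\<exists>p. 0 \<le> p \<and> p \<le> 1/2 \<and> bin_entropy p = s"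
  proof -
    have "continuous_on {0..1/2} bin_entropy" using h_cont by (rule continuous_on_subset) auto
    then obtain p where "0 \<le> p" "p \<le> 1/2" "bin_entropy p = s"
      using IVT'[of bin_entropy 0 s "1/2"] assms h_half by auto
    then show ?thesis by blast
  qed
  have uniq: "p = p'" if "0 \<le> p \<and> p \<le> 1/2 \<and> bin_entropy p = s" "0 \<le> p' \<and> p' \<le> 1/2 \<and> bin_entropy p' = s" for p p'
    using h_strict[of p p'] h_strict[of p' p] that by (cases p p' rule: linorder_cases) auto
  have "\<exists>!p. 0 \<le> p \<and> p \<le> 1/2 \<and> bin_entropy p = s" using ex uniq by blast
  from theI'[OF this] show ?thesis unfolding bin_entropy_inv_def .
qed

lemma inv_mono: assumes "0 \<le> s1" "s1 \<le> s2" "s2 \<le> 1"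
  shows "bin_entropy_inv s1 \<le> bin_entropy_inv s2"
proof (rule ccontr)
  assume "\<not> ?thesis"
  then have "bin_entropy_inv s2 < bin_entropy_inv s1" by simp
  from h_strict[OF _ this] inv_props[of s1] inv_props[of s2] assms
  show False by auto
qed

lemma inv_pos: assumes "0 < s" "s \<le> 1" shows "0 < bin_entropy_inv s"
  using inv_props[of s] assms by (cases "bin_entropy_inv s = 0") auto

lemma inv_lt_half: assumes "0 \<le> s" "s < 1" shows "bin_entropy_inv s < 1/2"
  using inv_props[of s] assms h_half by (cases "bin_entropy_inv s = 1/2") auto

lemma inv_one: "bin_entropy_inv 1 = 1/2"
proof -
  have "\<not> bin_entropy_inv 1 < 1/2" using inv_props[of 1] h_strict[of "bin_entropy_inv 1" "1/2"] h_half by auto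
  then show ?thesis using inv_props[of 1] by auto
qed

lemma tau_nonneg: assumes "0 \<le> s" "s \<le> 1" shows "0 \<le> tau s"
  using inv_props[OF assms] unfolding tau_def by auto

lemma tau_one: "tau 1 = 1"
  unfolding tau_def inv_one by (simp add: real_sqrt_divide)

lemma prod_mono_half: fixes a b :: real assumes "0 \<le> a" "a \<le> b" "b \<le> 1/2" shows "a * (1 - a) \<le> b * (1 - b)"
proof -
  have "b * (1 - b) - a * (1 - a) = (b - a) * (1 - a - b)" by (simp add: algebra_simps)
  also have "\<dots> \<ge> 0" using assms by auto
  finally show ?thesis by simp
qed

lemma tau_mono: assumes "0 \<le> s1" "s1 \<le> s2" "s2 \<le> 1" shows "tau s1 \<le> tau s2"
proof -
  have "bin_entropy_inv s1 \<le> bin_entropy_inv s2" using inv_mono assms by blast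
  then show ?thesis unfolding tau_def using inv_props[of s1] inv_props[of s2] assms
    by (auto intro!: prod_mono_half)
qed

lemma L_ln: fixes y :: real assumes "1 \<le> y" shows "2 * (y - 1) / (y + 1) \<le> ln y"
proof -
  let ?f = "\<lambda>t::real. ln t - 2 * (t - 1) / (t + 1)"
  have "?f 1 \<le> ?f y"
  proof (rule DERIV_nonneg_imp_increasing_open[OF assms])
    fix x :: real assume x: "1 < x" "x < y"
    have "(?f has_real_derivative (1 / x - (2 * 1 * (x + 1) - 2 * (x - 1) * 1) / (x + 1)^2)) (at x)"
      using x by (auto intro!: derivative_eq_intros simp: power2_eq_square)
    moreover have "1 / x - (2 * 1 * (x + 1) - 2 * (x - 1) * 1) / (x + 1)^2 = (x - 1)^2 / (x * (x + 1)^2)"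
    proof -
      have nz: "x \<noteq> 0" "x + 1 \<noteq> 0" using x by auto
      have e1: "(2 * 1 * (x + 1) - 2 * (x - 1) * 1) = (4::real)" by simp
      have "(x - 1)^2 / (x * (x + 1)^2) = ((x + 1)^2 - 4 * x) / (x * (x + 1)^2)"
        by (simp add: power2_eq_square algebra_simps)
      also have "\<dots> = (x + 1)^2 / (x * (x + 1)^2) - (4 * x) / (x * (x + 1)^2)"
        by (rule diff_divide_distrib)
      also have "(x + 1)^2 / (x * (x + 1)^2) = 1 / x" using nz by simp
      also have "(4 * x) / (x * (x + 1)^2) = 4 / (x + 1)^2" using nz by simp
      finally show ?thesis using e1 by simp
    qed
    moreover have "(x - 1)^2 / (x * (x + 1)^2) \<ge> 0" using x by auto
    ultimately show "\<exists>d. (?f has_real_derivative d) (at x) \<and> 0 \<le> d" by metis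
  next
    show "continuous_on {1..y} ?f" by (intro continuous_intros) auto
  qed
  then show ?thesis by simp
qed

definition kf :: "real \<Rightarrow> real" where "kf x = (x - 1 / x) / ln x"

lemma kf_mono: assumes "1 < a" "a \<le> b" shows "kf a \<le> kf b"
  unfolding kf_def
proof (rule DERIV_nonneg_imp_increasing_open[OF assms(2)])
  fix x :: real assume x: "a < x" "x < b"
  then have x1: "1 < x" using assms by auto
  then have lnx: "ln x > 0" by simp
  have x0: "x \<noteq> 0" using x1 by simp
  have d0: "((\<lambda>x. (x - 1 / x) / ln x) has_real_derivative
      (((1 - (- (1 / (x * x)))) * ln x - (x - 1 / x) * (1 / x)) / (ln x * ln x))) (at x)"
    using x1 lnx
    by (intro derivative_eq_intros DERIV_ln_divide refl) (auto simp: divide_inverse power2_eq_square)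
  have "1 \<le> x^2" using x1 by (simp add: one_le_power)
  then have A: "2 * (x^2 - 1) / (x^2 + 1) \<le> ln (x^2)" using L_ln[of "x^2"] by simp
  have B: "2 * (x^2 - 1) \<le> ln (x^2) * (x^2 + 1)"
  proof -
    have pos: "0 < x^2 + 1" by (metis add_pos_nonneg zero_le_power2 zero_less_one add.commute)
    show ?thesis using A by (simp only: pos_divide_le_eq[OF pos])
  qed
  have "ln (x^2) = 2 * ln x" using x1 by (simp add: ln_realpow)
  then have "2 * (x^2 - 1) \<le> 2 * (ln x * (x^2 + 1))" using B by (simp add: mult.assoc)
  then have "(x^2 - 1) \<le> ln x * (x^2 + 1)" by (rule mult_left_le_imp_le) simp
  then have "(x^2 - 1) / x^2 \<le> ln x * (x^2 + 1) / x^2"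
    by (intro divide_right_mono) auto
  moreover have "(x^2 - 1) / x^2 = (x - 1 / x) * (1 / x)" using x0
    by (simp add: power2_eq_square diff_divide_distrib algebra_simps)
  moreover have "ln x * (x^2 + 1) / x^2 = (1 - (- (1 / (x * x)))) * ln x" using x0
    by (simp add: power2_eq_square add_divide_distrib algebra_simps)
  ultimately have "0 \<le> (1 - (- (1 / (x * x)))) * ln x - (x - 1 / x) * (1 / x)" by simp
  then show "\<exists>y. ((\<lambda>x. (x - 1 / x) / ln x) has_real_derivative y) (at x) \<and> 0 \<le> y"
    using d0 by (intro exI[of _ "((1 - (- (1 / (x * x)))) * ln x - (x - 1 / x) * (1 / x)) / (ln x * ln x)"]) auto
next
  show "continuous_on {a..b} (\<lambda>x. (x - 1 / x) / ln x)"
    using assms by (intro continuous_intros) auto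
qed

lemma xq_facts: assumes "0 < q" "q < 1/2"
  shows "sqrt ((1-q)/q) > 1"
    and "(1 - 2*q) / sqrt (q*(1-q)) = kf (sqrt ((1-q)/q)) * ln (sqrt ((1-q)/q))"
    and "(ln (1-q) - ln q) / ln 2 = 2 * ln (sqrt ((1-q)/q)) / ln 2"
proof -
  have r1: "(1-q)/q > 1" using assms by (simp add: field_simps)
  then show x1: "sqrt ((1-q)/q) > 1" by simp
  then have lnpos: "ln (sqrt ((1-q)/q)) > 0" by simp
  define a where "a = sqrt q"
  define b where "b = sqrt (1 - q)"
  have a: "a > 0" "a^2 = q" using assms unfolding a_def by auto
  have b: "b > 0" "b^2 = 1 - q" using assms unfolding b_def by auto
  have x: "sqrt ((1-q)/q) = b / a" unfolding a_def b_def by (simp add: real_sqrt_divide)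
  have s: "sqrt (q*(1-q)) = a * b" unfolding a_def b_def by (simp add: real_sqrt_mult)
  have "kf (sqrt ((1-q)/q)) * ln (sqrt ((1-q)/q)) = sqrt ((1-q)/q) - 1 / sqrt ((1-q)/q)"
    unfolding kf_def using lnpos by simp
  also have "\<dots> = b / a - a / b" unfolding x by simp
  also have "\<dots> = (b^2 - a^2) / (a * b)" using a b by (simp add: field_simps power2_eq_square)
  also have "\<dots> = (1 - 2*q) / sqrt (q*(1-q))" unfolding s using a b by simp
  finally show "(1 - 2*q) / sqrt (q*(1-q)) = kf (sqrt ((1-q)/q)) * ln (sqrt ((1-q)/q))" by simp
  have "ln (sqrt ((1-q)/q)) = ln ((1-q)/q) / 2" using r1 by (simp add: ln_sqrt)
  also have "ln ((1-q)/q) = ln (1-q) - ln q" using assms by (simp add: ln_div)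
  finally show "(ln (1-q) - ln q) / ln 2 = 2 * ln (sqrt ((1-q)/q)) / ln 2" by simp
qed

lemma xq_mono: assumes "0 < q1" "q1 \<le> q2" shows "sqrt ((1-q2)/q2) \<le> sqrt ((1-q1)/q1)"
proof -
  have "(1-q2)/q2 = 1/q2 - 1" "(1-q1)/q1 = 1/q1 - 1" using assms by (auto simp: field_simps)
  moreover have "1/q2 \<le> 1/q1" using assms by (simp add: frac_le)
  ultimately show ?thesis by simp
qed

definition gf :: "real \<Rightarrow> real" where "gf q = 2 * sqrt (q * (1 - q))"

lemma gf_sym: "gf (1 - q) = gf q" unfolding gf_def by (simp add: mult.commute)

lemma tangent:
  assumes p: "0 < p" "p < 1/2"
  shows "\<exists>c\<ge>0. \<forall>q\<in>{0..1}. gf q \<le> gf p + c * (bin_entropy q - bin_entropy p)"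
proof -
  define xp where "xp = sqrt ((1-p)/p)"
  have xp1: "xp > 1" using xq_facts(1)[OF p] unfolding xp_def .
  define c where "c = kf xp * ln 2 / 2"
  have "1 / xp < 1" using xp1 by simp
  then have kfpos: "kf xp > 0" unfolding kf_def using xp1 by (intro divide_pos_pos) (linarith, simp)
  then have c0: "c \<ge> 0" unfolding c_def by simp
  define F where "F q = gf q - c * bin_entropy q" for q
  have Fcont: "continuous_on {0..1} F"
    unfolding F_def[abs_def] gf_def
    by (intro continuous_intros h_cont) 
  have Fder: "(F has_real_derivative ln (sqrt ((1-x)/x)) * (kf (sqrt ((1-x)/x)) - kf xp)) (at x)"
    if x: "0 < x" "x < 1/2" for x
  proof -
    have pos: "0 < x * (1 - x)" using x by simp
    have "(gf has_real_derivative (2 * (inverse (sqrt (x * (1 - x))) / 2 * (1 * (1 - x) + x * (0 - 1))))) (at x)"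
      unfolding gf_def[abs_def] using pos by (auto intro!: derivative_eq_intros)
    moreover have "2 * (inverse (sqrt (x * (1 - x))) / 2 * (1 * (1 - x) + x * (0 - 1))) = (1 - 2*x) / sqrt (x*(1-x))"
    proof -
      have sp: "sqrt (x*(1-x)) > 0" using pos by simp
      have "\<And>s::real. s > 0 \<Longrightarrow> 2 * (inverse s / 2 * (1 * (1 - x) + x * (0 - 1))) = (1 - 2*x) / s"
        by (simp add: field_simps)
      from this[OF sp] show ?thesis .
    qed
    ultimately have dg: "(gf has_real_derivative (1 - 2*x) / sqrt (x*(1-x))) (at x)" by simp
    have dh: "(bin_entropy has_real_derivative (ln (1 - x) - ln x) / ln 2) (at x)"
      using h_deriv x by simp
    have "(F has_real_derivative ((1 - 2*x) / sqrt (x*(1-x)) - c * ((ln (1 - x) - ln x) / ln 2))) (at x)"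
      unfolding F_def[abs_def] by (intro derivative_intros DERIV_cmult dg dh)
    moreover have "(1 - 2*x) / sqrt (x*(1-x)) - c * ((ln (1 - x) - ln x) / ln 2)
        = ln (sqrt ((1-x)/x)) * (kf (sqrt ((1-x)/x)) - kf xp)"
      unfolding xq_facts(2,3)[OF x] c_def by (simp add: algebra_simps)
    ultimately show ?thesis by simp
  qed
  have left: "F q \<le> F p" if q: "0 \<le> q" "q \<le> p" for q
  proof (rule DERIV_nonneg_imp_increasing_open[OF q(2)])
    fix x assume x: "q < x" "x < p"
    then have x': "0 < x" "x < 1/2" using q p by auto
    have "sqrt ((1-p)/p) \<le> sqrt ((1-x)/x)" using xq_mono[of x p] x' x by simp
    then have "kf xp \<le> kf (sqrt ((1-x)/x))" unfolding xp_def[symmetric] using kf_mono xp1 by blast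
    moreover have "ln (sqrt ((1-x)/x)) > 0" using xq_facts(1)[OF x'] by simp
    ultimately show "\<exists>y. (F has_real_derivative y) (at x) \<and> 0 \<le> y"
      using Fder[OF x'] by (intro exI[of _ "ln (sqrt ((1-x)/x)) * (kf (sqrt ((1-x)/x)) - kf xp)"]) auto
  next
    show "continuous_on {q..p} F" using Fcont by (rule continuous_on_subset) (use q p in auto)
  qed
  have right: "F q \<le> F p" if q: "p \<le> q" "q \<le> 1/2" for q
  proof (rule DERIV_nonpos_imp_decreasing_open[OF q(1)])
    fix x assume x: "p < x" "x < q"
    then have x': "0 < x" "x < 1/2" using q p by auto
    have "sqrt ((1-x)/x) \<le> sqrt ((1-p)/p)" using xq_mono[of p x] p x by simp
    then have "kf (sqrt ((1-x)/x)) \<le> kf xp" unfolding xp_def[symmetric] using kf_mono xq_facts(1)[OF x'] by blast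
    moreover have "ln (sqrt ((1-x)/x)) > 0" using xq_facts(1)[OF x'] by simp
    ultimately show "\<exists>y. (F has_real_derivative y) (at x) \<and> y \<le> 0"
      using Fder[OF x'] by (intro exI[of _ "ln (sqrt ((1-x)/x)) * (kf (sqrt ((1-x)/x)) - kf xp)"])
        (auto simp: mult_le_0_iff)
  next
    show "continuous_on {p..q} F" using Fcont by (rule continuous_on_subset) (use q p in auto)
  qed
  have "F q \<le> F p" if q: "0 \<le> q" "q \<le> 1" for q
  proof (cases "q \<le> 1/2")
    case True
    then show ?thesis using left right q by (cases "q \<le> p") auto
  next
    case False
    have "F q = F (1 - q)" unfolding F_def gf_sym h_sym ..
    also have "\<dots> \<le> F p" using left right q False by (cases "1 - q \<le> p") auto
    finally show ?thesis .
  qed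
  then have "\<forall>q\<in>{0..1}. gf q \<le> gf p + c * (bin_entropy q - bin_entropy p)"
    unfolding F_def by (auto simp: algebra_simps)
  with c0 show ?thesis by blast
qed

definition flip :: "nat \<Rightarrow> nat set \<Rightarrow> nat set" where
  "flip i S = S - {i} \<union> ({i} - S)"

lemma flip_eq: "flip i S = (if i \<in> S then S - {i} else insert i S)"
  unfolding flip_def by auto

lemma flip_flip[simp]: "flip i (flip i S) = S"
  unfolding flip_eq by auto

lemma flip_Pow: "i \<in> I \<Longrightarrow> S \<in> Pow I \<Longrightarrow> flip i S \<in> Pow I"
  unfolding flip_eq by auto

lemma sum_flip: assumes "i \<in> I" shows "(\<Sum>S\<in>Pow I. f (flip i S)) = (\<Sum>S\<in>Pow I. f S)"
  by (rule sum.reindex_bij_witness[where i="flip i" and j="flip i"]) (use assms flip_Pow in auto)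

lemma sum_Pow_insert: assumes "finite I" "j \<notin> I"
  shows "(\<Sum>S\<in>Pow (insert j I). f S) = (\<Sum>T\<in>Pow I. f T + f (insert j T))"
proof -
  have inj: "inj_on (insert j) (Pow I)"
    by (rule inj_onI) (use assms in \<open>auto simp: insert_ident\<close>)
  have "Pow (insert j I) = Pow I \<union> insert j ` Pow I" by (rule Pow_insert)
  moreover have "Pow I \<inter> insert j ` Pow I = {}" using assms by auto
  ultimately have "(\<Sum>S\<in>Pow (insert j I). f S) = (\<Sum>S\<in>Pow I. f S) + (\<Sum>S\<in>insert j ` Pow I. f S)"
    using assms by (simp add: sum.union_disjoint)
  also have "(\<Sum>S\<in>insert j ` Pow I. f S) = (\<Sum>T\<in>Pow I. f (insert j T))"
    using sum.reindex[OF inj] by simp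
  finally show ?thesis by (simp add: sum.distrib)
qed

lemma log_sum2:
  fixes a b c d :: real
  assumes "0 \<le> a" "0 \<le> b" "0 \<le> c" "0 \<le> d"
  shows "a * ln ((a + b) / a) + c * ln ((c + d) / c) \<le> (a + c) * ln ((a + b + c + d) / (a + c))"
proof (cases "a = 0 \<or> c = 0")
  case True
  then show ?thesis
  proof
    assume a0: "a = 0"
    show ?thesis
    proof (cases "c = 0")
      case False
      then have "c > 0" using assms by simp
      then have "ln ((c + d) / c) \<le> ln ((b + c + d) / c)" using assms
        by (subst ln_le_cancel_iff) (auto intro!: divide_right_mono add_pos_nonneg)
      then show ?thesis using a0 \<open>c > 0\<close> by (simp add: add.assoc)
    qed (simp add: a0)
  next
    assume c0: "c = 0"
    show ?thesis
    proof (cases "a = 0")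
      case False
      then have "a > 0" using assms by simp
      then have "ln ((a + b) / a) \<le> ln ((a + b + d) / a)" using assms
        by (subst ln_le_cancel_iff) (auto intro!: divide_right_mono add_pos_nonneg)
      then show ?thesis using c0 \<open>a > 0\<close> by (simp add: add.assoc)
    qed (simp add: c0)
  qed
next
  case False
  then have a: "a > 0" and c: "c > 0" using assms by auto
  define A where "A = a + b + c + d"
  have A: "A > 0" unfolding A_def using a assms by simp
  define u where "u = (a + b) * (a + c) / (a * A)"
  define v where "v = (c + d) * (a + c) / (c * A)"
  have u: "u > 0" unfolding u_def using a c A assms by (intro divide_pos_pos mult_pos_pos) auto
  have v: "v > 0" unfolding v_def using a c A assms by (intro divide_pos_pos mult_pos_pos) auto
  have e1: "ln ((a + b) / a) - ln (A / (a + c)) = ln u"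
  proof -
    have "ln ((a + b) / a) - ln (A / (a + c)) = ln (((a + b) / a) / (A / (a + c)))"
      using a c A assms by (simp add: ln_div ln_mult add_pos_nonneg)
    also have "((a + b) / a) / (A / (a + c)) = u" unfolding u_def using a c A by (simp add: field_simps)
    finally show ?thesis .
  qed
  have e2: "ln ((c + d) / c) - ln (A / (a + c)) = ln v"
  proof -
    have "ln ((c + d) / c) - ln (A / (a + c)) = ln (((c + d) / c) / (A / (a + c)))"
      using a c A assms by (simp add: ln_div ln_mult add_pos_nonneg)
    also have "((c + d) / c) / (A / (a + c)) = v" unfolding v_def using a c A by (simp add: field_simps)
    finally show ?thesis .
  qed
  have "a * ln ((a + b) / a) + c * ln ((c + d) / c) - (a + c) * ln (A / (a + c))
      = a * ln u + c * ln v"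
    using e1 e2 by (simp add: algebra_simps)
  also have "\<dots> \<le> a * (u - 1) + c * (v - 1)"
    using ln_le_minus_one[OF u] ln_le_minus_one[OF v] a c
    by (intro add_mono mult_left_mono) auto
  also have "a * (u - 1) + c * (v - 1) = 0"
  proof -
    have "a * u = (a + b) * (a + c) / A" unfolding u_def using a by simp
    moreover have "c * v = (c + d) * (a + c) / A" unfolding v_def using c by simp
    moreover have "(a + b) * (a + c) / A + (c + d) * (a + c) / A = (a + c) * A / A"
      unfolding A_def by (simp add: add_divide_distrib[symmetric] algebra_simps)
    moreover have "(a + c) * A / A = a + c" using A by simp
    ultimately show ?thesis by (simp add: algebra_simps)
  qed
  finally show ?thesis unfolding A_def by simp
qed

definition Hterm :: "(nat set \<Rightarrow> real) \<Rightarrow> nat \<Rightarrow> nat set \<Rightarrow> real" where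
  "Hterm P i I = (\<Sum>S\<in>Pow I. P S * ln ((P S + P (flip i S)) / P S))"

definition Ent :: "(nat set \<Rightarrow> real) \<Rightarrow> nat set \<Rightarrow> real" where
  "Ent P I = (\<Sum>S\<in>Pow I. P S * ln (P S))"

lemma ent2: fixes x y :: real assumes "0 \<le> x" "0 \<le> y"
  shows "x * ln ((x + y) / x) + y * ln ((x + y) / y) = (x + y) * ln (x + y) - x * ln x - y * ln y"
proof -
  have "x * ln ((x + y) / x) = x * ln (x + y) - x * ln x"
    using assms by (cases "x = 0") (auto simp: ln_div algebra_simps)
  moreover have "y * ln ((x + y) / y) = y * ln (x + y) - y * ln y"
    using assms by (cases "y = 0") (auto simp: ln_div algebra_simps)
  ultimately show ?thesis by (simp add: algebra_simps)
qed

lemma han: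
  assumes "finite I" "\<And>S. 0 \<le> P S"
  shows "(\<Sum>i\<in>I. Hterm P i I) \<le> (\<Sum>S\<in>Pow I. P S) * ln (\<Sum>S\<in>Pow I. P S) - Ent P I"
  using assms
proof (induction I arbitrary: P rule: finite_induct)
  case empty
  then show ?case by (simp add: Ent_def)
next
  case (insert j I)
  note fin = insert.hyps(1) and jI = insert.hyps(2)
  define P' where "P' T = P T + P (insert j T)" for T
  have P'0: "0 \<le> P' T" for T unfolding P'_def using insert.prems by (simp add: add_nonneg_nonneg)
  have IH: "(\<Sum>i\<in>I. Hterm P' i I) \<le> (\<Sum>S\<in>Pow I. P' S) * ln (\<Sum>S\<in>Pow I. P' S) - Ent P' I"
    using insert.IH[of P'] P'0 by blast
  have mass: "(\<Sum>S\<in>Pow (insert j I). P S) = (\<Sum>S\<in>Pow I. P' S)"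
    unfolding P'_def by (rule sum_Pow_insert[OF fin jI])
  have notin: "j \<notin> T" if "T \<in> Pow I" for T using that jI by auto
  have Hj: "Hterm P j (insert j I) = Ent P' I - Ent P (insert j I)"
  proof -
    have "Hterm P j (insert j I) = (\<Sum>T\<in>Pow I. P T * ln (P' T / P T) + P (insert j T) * ln (P' T / P (insert j T)))"
      unfolding Hterm_def sum_Pow_insert[OF fin jI]
    proof (rule sum.cong[OF refl])
      fix T assume T: "T \<in> Pow I"
      have "flip j T = insert j T" "flip j (insert j T) = T" using notin[OF T] unfolding flip_eq by auto
      then show "P T * ln ((P T + P (flip j T)) / P T) +
          P (insert j T) * ln ((P (insert j T) + P (flip j (insert j T))) / P (insert j T)) =
          P T * ln (P' T / P T) + P (insert j T) * ln (P' T / P (insert j T))"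
        unfolding P'_def by (simp add: add.commute)
    qed
    also have "\<dots> = (\<Sum>T\<in>Pow I. P' T * ln (P' T) - P T * ln (P T) - P (insert j T) * ln (P (insert j T)))"
      unfolding P'_def using insert.prems by (intro sum.cong refl ent2)
    also have "\<dots> = Ent P' I - Ent P (insert j I)"
      unfolding Ent_def sum_Pow_insert[OF fin jI] by (simp add: sum_subtractf sum.distrib)
    finally show ?thesis .
  qed
  have Hi: "Hterm P i (insert j I) \<le> Hterm P' i I" if i: "i \<in> I" for i
  proof -
    have "Hterm P i (insert j I) = (\<Sum>T\<in>Pow I. P T * ln ((P T + P (flip i T)) / P T) +
        P (insert j T) * ln ((P (insert j T) + P (insert j (flip i T))) / P (insert j T)))"
      unfolding Hterm_def sum_Pow_insert[OF fin jI]
    proof (rule sum.cong[OF refl])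
      fix T assume T: "T \<in> Pow I"
      have "i \<noteq> j" using i jI by auto
      then have "flip i (insert j T) = insert j (flip i T)" unfolding flip_eq by auto
      then show "P T * ln ((P T + P (flip i T)) / P T) +
          P (insert j T) * ln ((P (insert j T) + P (flip i (insert j T))) / P (insert j T)) =
          P T * ln ((P T + P (flip i T)) / P T) +
          P (insert j T) * ln ((P (insert j T) + P (insert j (flip i T))) / P (insert j T))" by simp
    qed
    also have "\<dots> \<le> (\<Sum>T\<in>Pow I. P' T * ln ((P' T + P' (flip i T)) / P' T))"
    proof (rule sum_mono)
      fix T assume T: "T \<in> Pow I"
      have "P T * ln ((P T + P (flip i T)) / P T) +
        P (insert j T) * ln ((P (insert j T) + P (insert j (flip i T))) / P (insert j T))
        \<le> (P T + P (insert j T)) * ln ((P T + P (flip i T) + P (insert j T) + P (insert j (flip i T))) / (P T + P (insert j T)))"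
        using insert.prems by (intro log_sum2) auto
      also have "P T + P (flip i T) + P (insert j T) + P (insert j (flip i T)) = P' T + P' (flip i T)"
        unfolding P'_def by simp
      finally show "P T * ln ((P T + P (flip i T)) / P T) +
        P (insert j T) * ln ((P (insert j T) + P (insert j (flip i T))) / P (insert j T))
        \<le> P' T * ln ((P' T + P' (flip i T)) / P' T)" unfolding P'_def by simp
    qed
    also have "\<dots> = Hterm P' i I" unfolding Hterm_def ..
    finally show ?thesis .
  qed
  have "(\<Sum>i\<in>insert j I. Hterm P i (insert j I)) = Hterm P j (insert j I) + (\<Sum>i\<in>I. Hterm P i (insert j I))"
    using fin jI by simp
  also have "\<dots> \<le> (Ent P' I - Ent P (insert j I)) + (\<Sum>i\<in>I. Hterm P' i I)"
    unfolding Hj by (intro add_left_mono sum_mono Hi)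
  also have "\<dots> \<le> (Ent P' I - Ent P (insert j I)) + ((\<Sum>S\<in>Pow I. P' S) * ln (\<Sum>S\<in>Pow I. P' S) - Ent P' I)"
    using IH by simp
  finally show ?case unfolding mass by simp
qed

lemma tangent_full: assumes "0 < s" "s \<le> 1"
  shows "\<exists>c\<ge>0. \<forall>q\<in>{0..1}. gf q \<le> tau s + c * (bin_entropy q - s)"
proof (cases "s = 1")
  case True
  have "gf q \<le> 1" for q
  proof -
    have "(1/2)^2 - q * (1 - q) = (q - 1/2)^2" by (simp add: power2_eq_square algebra_simps)
    then have "q * (1 - q) \<le> (1/2)^2" by (metis diff_ge_0_iff_ge zero_le_power2)
    then have "sqrt (q * (1 - q)) \<le> sqrt ((1/2)^2)" by (rule real_sqrt_le_mono)
    then have "sqrt (q * (1 - q)) \<le> 1/2" by simp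
    then show ?thesis unfolding gf_def by simp
  qed
  then show ?thesis using True tau_one by (intro exI[of _ 0]) auto
next
  case False
  let ?p = "bin_entropy_inv s"
  have p: "0 < ?p" "?p < 1/2" using inv_pos inv_lt_half assms False by auto
  have hp: "bin_entropy ?p = s" using inv_props assms by auto
  have tp: "tau s = gf ?p" unfolding tau_def gf_def ..
  show ?thesis using tangent[OF p] unfolding hp tp .
qed

lemma gibbs:
  fixes P Q :: "'a \<Rightarrow> real"
  assumes "finite X" "\<And>S. S \<in> X \<Longrightarrow> 0 \<le> P S" "sum P X = 1" "\<And>S. S \<in> X \<Longrightarrow> 0 \<le> Q S"
    "sum Q X \<le> 1" "\<And>S. S \<in> X \<Longrightarrow> 0 < P S \<Longrightarrow> 0 < Q S"
  shows "- (\<Sum>S\<in>X. P S * ln (P S)) \<le> - (\<Sum>S\<in>X. P S * ln (Q S))"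
proof -
  have "(\<Sum>S\<in>X. P S * ln (Q S) - P S * ln (P S)) \<le> (\<Sum>S\<in>X. Q S - P S)"
  proof (rule sum_mono)
    fix S assume S: "S \<in> X"
    show "P S * ln (Q S) - P S * ln (P S) \<le> Q S - P S"
    proof (cases "P S = 0")
      case True then show ?thesis using assms(4)[OF S] by simp
    next
      case False
      then have pp: "P S > 0" using assms(2)[OF S] by simp
      then have qq: "Q S > 0" using assms(6)[OF S] by simp
      have "ln (Q S / P S) \<le> Q S / P S - 1" using ln_le_minus_one pp qq by simp
      then have "P S * ln (Q S / P S) \<le> P S * (Q S / P S - 1)" using pp by (simp add: mult_left_mono)
      moreover have "ln (Q S / P S) = ln (Q S) - ln (P S)" using pp qq by (simp add: ln_div)
      ultimately show ?thesis using pp by (simp add: right_diff_distrib)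
    qed
  qed
  then show ?thesis using assms(3,5) by (simp add: sum_subtractf)
qed

lemma ent_term: fixes x T :: real assumes "0 \<le> x" "0 < T"
  shows "T * (- (x / T) * log 2 (x / T)) = x * ln (T / x) / ln 2"
proof (cases "x = 0")
  case False
  then have "x > 0" using assms by simp
  have l1: "log 2 (x / T) = (ln x - ln T) / ln 2" using \<open>x > 0\<close> assms by (simp add: log_def ln_div)
  have l2: "ln (T / x) = ln T - ln x" using \<open>x > 0\<close> assms by (simp add: ln_div)
  have "T * (- (x / T) * log 2 (x / T)) = - x * ((ln x - ln T) / ln 2)" unfolding l1 using assms by simp
  also have "\<dots> = x * ln (T / x) / ln 2" unfolding l2 by (simp add: algebra_simps)
  finally show ?thesis .
qed simp

lemma pairineq:
  fixes a b c s :: real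
  assumes "0 \<le> a" "0 \<le> b" "0 \<le> c" "\<forall>q\<in>{0..1}. gf q \<le> tau s + c * (bin_entropy q - s)"
  shows "2 * a * b \<le> (a^2 + b^2) * tau s
     + c * ((a^2 * ln ((a^2 + b^2) / a^2) + b^2 * ln ((b^2 + a^2) / b^2)) / ln 2 - (a^2 + b^2) * s)"
proof (cases "a^2 + b^2 = 0")
  case True
  then have "a = 0" "b = 0" using assms by (auto simp: add_nonneg_eq_0_iff)
  then show ?thesis by simp
next
  case False
  define T where "T = a^2 + b^2"
  have T: "T > 0" unfolding T_def using False by (metis add_nonneg_nonneg zero_le_power2 order_le_less)
  define q where "q = a^2 / T"
  have Tab: "T = a^2 + b^2" by (simp add: T_def)
  have q1: "1 - q = b^2 / T"
  proof -
    have "1 - q = T / T - a^2 / T" unfolding q_def using T by simp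
    also have "\<dots> = (T - a^2) / T" by (rule diff_divide_distrib[symmetric])
    also have "T - a^2 = b^2" unfolding Tab by simp
    finally show ?thesis .
  qed
  have q: "q \<in> {0..1}"
  proof -
    have "a^2 \<le> T" unfolding Tab by simp
    then have "q \<le> 1" unfolding q_def using T by simp
    moreover have "0 \<le> q" unfolding q_def using T by simp
    ultimately show ?thesis by simp
  qed
  have "gf q = 2 * (a * b) / T"
  proof -
    have "q * (1 - q) = (a * b / T)^2" unfolding q1 unfolding q_def by (simp add: power2_eq_square)
    then have "sqrt (q * (1 - q)) = a * b / T" using assms T by simp
    then show ?thesis unfolding gf_def by simp
  qed
  then have g: "T * gf q = 2 * a * b" using T by simp
  have h: "T * bin_entropy q = (a^2 * ln (T / a^2) + b^2 * ln (T / b^2)) / ln 2"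
  proof -
    have "T * bin_entropy q = T * (- q * log 2 q) + T * (- (1 - q) * log 2 (1 - q))"
      unfolding bin_entropy_def by (simp add: algebra_simps)
    also have "\<dots> = a^2 * ln (T / a^2) / ln 2 + b^2 * ln (T / b^2) / ln 2"
    proof -
      have e1: "T * (- (a^2/T) * log 2 (a^2/T)) = a^2 * ln (T/a^2) / ln 2" by (rule ent_term) (use T in auto)
      have e2: "T * (- (b^2/T) * log 2 (b^2/T)) = b^2 * ln (T/b^2) / ln 2" by (rule ent_term) (use T in auto)
      show ?thesis unfolding q1 unfolding q_def by (simp only: e1 e2)
    qed
    finally show ?thesis by (simp add: add_divide_distrib)
  qed
  have "T * gf q \<le> T * (tau s + c * (bin_entropy q - s))"
    using assms(4) q T by (intro mult_left_mono) auto
  also have "\<dots> = T * tau s + c * (T * bin_entropy q - T * s)" by (simp add: algebra_simps)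
  finally have fin: "2*a*b \<le> T*tau s + c*((a^2 * ln (T/a^2) + b^2 * ln (T/b^2))/ln 2 - T*s)" unfolding g h .
  have "b^2 + a^2 = T" by (simp add: T_def)
  have "b^2 + a^2 = a^2 + b^2" by simp
  then show ?thesis using fin unfolding T_def by metis
qed

lemma quad:
  fixes w Q :: "nat set \<Rightarrow> real" and N :: nat and s :: real
  assumes w0: "\<And>S. 0 \<le> w S" and wn: "(\<Sum>S\<in>Pow {..<N}. (w S)^2) = 1"
    and s: "0 < s" "s \<le> 1"
    and Q0: "\<And>S. S \<in> Pow {..<N} \<Longrightarrow> 0 \<le> Q S" and Q1: "sum Q (Pow {..<N}) \<le> 1"
    and Qp: "\<And>S. S \<in> Pow {..<N} \<Longrightarrow> 0 < (w S)^2 \<Longrightarrow> 0 < Q S"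
    and HQ: "- (\<Sum>S\<in>Pow {..<N}. (w S)^2 * ln (Q S)) \<le> ln 2 * real N * s"
  shows "(\<Sum>i<N. \<Sum>S\<in>Pow {..<N}. w S * w (flip i S)) \<le> real N * tau s"
proof -
  obtain c where c0: "c \<ge> 0" and tc: "\<forall>q\<in>{0..1}. gf q \<le> tau s + c * (bin_entropy q - s)"
    using tangent_full[OF s] by blast
  define P where "P S = (w S)^2" for S
  define I where "I = {..<N}"
  have P0: "0 \<le> P S" for S unfolding P_def by simp
  have per_i: "(\<Sum>S\<in>Pow I. w S * w (flip i S)) \<le> tau s + c * (Hterm P i I / ln 2 - s)"
    if i: "i \<in> I" for i
  proof -
    define A where "A S = P S * ln ((P S + P (flip i S)) / P S)" for S
    have sA: "sum A (Pow I) = Hterm P i I" unfolding A_def Hterm_def ..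
    have sB: "(\<Sum>S\<in>Pow I. A (flip i S)) = Hterm P i I" unfolding sum_flip[OF i] sA ..
    have sP: "(\<Sum>S\<in>Pow I. P S) = 1" using wn unfolding P_def I_def .
    have sP': "(\<Sum>S\<in>Pow I. P (flip i S)) = 1" unfolding sum_flip[OF i] sP ..
    have "(\<Sum>S\<in>Pow I. 2 * w S * w (flip i S)) \<le>
      (\<Sum>S\<in>Pow I. (P S + P (flip i S)) * tau s + c * ((A S + A (flip i S)) / ln 2 - (P S + P (flip i S)) * s))"
    proof (rule sum_mono)
      fix S assume "S \<in> Pow I"
      show "2 * w S * w (flip i S) \<le> (P S + P (flip i S)) * tau s + c * ((A S + A (flip i S)) / ln 2 - (P S + P (flip i S)) * s)"
        unfolding A_def P_def flip_flip using pairineq[OF w0 w0 c0 tc] by (simp add: add.commute)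
    qed
    also have "\<dots> = (\<Sum>S\<in>Pow I. P S + P (flip i S)) * tau s
        + c * ((\<Sum>S\<in>Pow I. A S + A (flip i S)) / ln 2 - (\<Sum>S\<in>Pow I. P S + P (flip i S)) * s)"
      by (simp add: sum.distrib sum_distrib_left sum_distrib_right sum_subtractf sum_divide_distrib[symmetric] algebra_simps)
    also have "\<dots> = 2 * (tau s + c * (Hterm P i I / ln 2 - s))"
      unfolding sum.distrib sP sP' sA sB by (simp add: algebra_simps)
    finally have "2 * (\<Sum>S\<in>Pow I. w S * w (flip i S)) \<le> 2 * (tau s + c * (Hterm P i I / ln 2 - s))"
      by (simp add: sum_distrib_left mult.assoc)
    then show ?thesis by simp
  qed
  have "(\<Sum>i\<in>I. \<Sum>S\<in>Pow I. w S * w (flip i S)) \<le> (\<Sum>i\<in>I. tau s + c * (Hterm P i I / ln 2 - s))"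
    by (rule sum_mono) (rule per_i)
  also have "\<dots> = real N * tau s + c * ((\<Sum>i\<in>I. Hterm P i I) / ln 2 - real N * s)"
    unfolding I_def by (simp add: sum.distrib sum_distrib_left sum_subtractf sum_divide_distrib algebra_simps)
  also have "\<dots> \<le> real N * tau s"
  proof -
    have "(\<Sum>i\<in>I. Hterm P i I) \<le> (\<Sum>S\<in>Pow I. P S) * ln (\<Sum>S\<in>Pow I. P S) - Ent P I"
      using han[of I P] P0 unfolding I_def by auto
    also have "(\<Sum>S\<in>Pow I. P S) = 1" using wn unfolding P_def I_def .
    also have "1 * ln 1 - Ent P I = - Ent P I" by simp
    also have "- Ent P I \<le> - (\<Sum>S\<in>Pow I. P S * ln (Q S))"
      unfolding Ent_def
      by (rule gibbs) (use wn Q0 Q1 Qp P0 in \<open>auto simp: P_def I_def\<close>)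
    also have "\<dots> \<le> ln 2 * real N * s" using HQ unfolding P_def I_def .
    finally have "(\<Sum>i\<in>I. Hterm P i I) / ln 2 \<le> real N * s" by (simp add: divide_le_eq mult.commute)
    then show ?thesis using c0 by (simp add: mult_le_0_iff)
  qed
  finally show ?thesis unfolding I_def .
qed

lemma sum_if_const: "finite X \<Longrightarrow> (\<Sum>S\<in>X. if P S then k else 0) = real (card {S\<in>X. P S}) * (k::real)"
  by (simp add: sum.If_cases Int_def conj_commute)

lemma bil:
  fixes u v :: "nat set \<Rightarrow> real" and N :: nat and s \<alpha> \<beta> :: real
  assumes u0: "\<And>S. 0 \<le> u S" and v0: "\<And>S. 0 \<le> v S"
    and un: "(\<Sum>S\<in>Pow {..<N}. (u S)^2) = 1" and vn: "(\<Sum>S\<in>Pow {..<N}. (v S)^2) = 1"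
    and disj: "\<And>S. S \<in> Pow {..<N} \<Longrightarrow> u S = 0 \<or> v S = 0"
    and cA: "real (card {S\<in>Pow {..<N}. u S \<noteq> 0}) \<le> \<alpha>"
    and cB: "real (card {S\<in>Pow {..<N}. v S \<noteq> 0}) \<le> \<beta>"
    and s: "0 < s" "s \<le> 1"
    and bound: "1 + log 2 \<alpha> / 2 + log 2 \<beta> / 2 \<le> real N * s"
  shows "(\<Sum>i<N. \<Sum>S\<in>Pow {..<N}. u S * v (flip i S)) \<le> real N * tau s"
proof -
  define I where "I = {..<N}"
  define A where "A = {S\<in>Pow I. u S \<noteq> 0}"
  define B where "B = {S\<in>Pow I. v S \<noteq> 0}"
  have finI: "finite (Pow I)" unfolding I_def by simp
  have finA: "finite A" unfolding A_def using finI by simp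
  have "A \<noteq> {}"
  proof
    assume "A = {}"
    then have "\<forall>S\<in>Pow I. u S = 0" unfolding A_def by auto
    then show False using un unfolding I_def by simp
  qed
  then have Ane: "card A \<ge> 1" using finA by (simp add: Suc_le_eq card_gt_0_iff)
  have finB: "finite B" unfolding B_def using finI by simp
  have "B \<noteq> {}"
  proof
    assume "B = {}"
    then have "\<forall>S\<in>Pow I. v S = 0" unfolding B_def by auto
    then show False using vn unfolding I_def by simp
  qed
  then have Bne: "card B \<ge> 1" using finB by (simp add: Suc_le_eq card_gt_0_iff)
  define w where "w S = (u S + v S) / sqrt 2" for S
  define Q where "Q S = (if u S \<noteq> 0 then 1 / (2 * card A) else if v S \<noteq> 0 then 1 / (2 * card B) else 0)" for S
  have w0: "0 \<le> w S" for S unfolding w_def using u0 v0 by (simp add: add_nonneg_nonneg)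
  have w2: "(w S)^2 = ((u S)^2 + (v S)^2) / 2" if "S \<in> Pow I" for S
  proof -
    have "u S * v S = 0" using disj[of S] that unfolding I_def by auto
    then show ?thesis unfolding w_def by (simp add: power2_eq_square algebra_simps power_divide)
  qed
  have wn: "(\<Sum>S\<in>Pow I. (w S)^2) = 1"
  proof -
    have "(\<Sum>S\<in>Pow I. (w S)^2) = (\<Sum>S\<in>Pow I. ((u S)^2 + (v S)^2) / 2)" by (rule sum.cong) (auto simp: w2)
    also have "\<dots> = ((\<Sum>S\<in>Pow I. (u S)^2) + (\<Sum>S\<in>Pow I. (v S)^2)) / 2"
      by (simp add: sum_divide_distrib[symmetric] sum.distrib)
    finally show ?thesis using un vn unfolding I_def by simp
  qed
  have Q0: "0 \<le> Q S" for S unfolding Q_def by simp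
  have Q1: "sum Q (Pow I) \<le> 1"
  proof -
    have "sum Q (Pow I) \<le> (\<Sum>S\<in>Pow I. (if u S \<noteq> 0 then 1 / (2 * card A) else 0) + (if v S \<noteq> 0 then 1 / (2 * card B) else 0))"
      by (rule sum_mono) (auto simp: Q_def)
    also have "\<dots> = real (card A) * (1 / (2 * card A)) + real (card B) * (1 / (2 * card B))"
      unfolding sum.distrib sum_if_const[OF finI] A_def B_def ..
    also have "\<dots> = 1" using Ane Bne by simp
    finally show ?thesis .
  qed
  have Qp: "0 < Q S" if "0 < (w S)^2" for S
  proof -
    have "u S \<noteq> 0 \<or> v S \<noteq> 0" using that unfolding w_def by auto
    then show ?thesis unfolding Q_def using Ane Bne by auto
  qed
  have HQ: "- (\<Sum>S\<in>Pow I. (w S)^2 * ln (Q S)) \<le> ln 2 * real N * s"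
  proof -
    have "- (\<Sum>S\<in>Pow I. (w S)^2 * ln (Q S)) = (\<Sum>S\<in>Pow I. (u S)^2 / 2 * ln (2 * card A) + (v S)^2 / 2 * ln (2 * card B))"
      unfolding sum_negf[symmetric]
    proof (rule sum.cong[OF refl])
      fix S assume S: "S \<in> Pow I"
      have d: "u S = 0 \<or> v S = 0" using disj S unfolding I_def by auto
      have lA: "ln (1 / (2 * real (card A))) = - ln (2 * card A)" using Ane by (simp add: ln_div)
      have lB: "ln (1 / (2 * real (card B))) = - ln (2 * card B)" using Bne by (simp add: ln_div)
      show "- ((w S)^2 * ln (Q S)) = (u S)^2 / 2 * ln (2 * card A) + (v S)^2 / 2 * ln (2 * card B)"
        unfolding w2[OF S] Q_def using d lA lB by auto
    qed
    also have "\<dots> = ln (2 * card A) / 2 + ln (2 * card B) / 2"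
      using un vn unfolding sum.distrib I_def
      by (simp add: sum_distrib_right[symmetric] sum_divide_distrib[symmetric])
    also have "\<dots> \<le> ln (2 * \<alpha>) / 2 + ln (2 * \<beta>) / 2"
    proof -
      have "card A \<le> \<alpha>" using cA unfolding A_def I_def .
      moreover have "card B \<le> \<beta>" using cB unfolding B_def I_def .
      ultimately show ?thesis using Ane Bne by (intro add_mono divide_right_mono) auto
    qed
    also have "\<dots> = ln 2 * (1 + log 2 \<alpha> / 2 + log 2 \<beta> / 2)"
    proof -
      have "\<alpha> > 0" "\<beta> > 0" using Ane Bne cA cB unfolding A_def B_def I_def by auto
      then show ?thesis by (simp add: ln_mult log_def algebra_simps add_divide_distrib)
    qed
    also have "\<dots> \<le> ln 2 * (real N * s)" using bound by (intro mult_left_mono) auto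
    finally show ?thesis by (simp add: mult.assoc)
  qed
  have Q: "(\<Sum>i<N. \<Sum>S\<in>Pow {..<N}. w S * w (flip i S)) \<le> real N * tau s"
    by (rule quad[OF w0 _ s Q0 _ Qp]) (use wn Q1 HQ in \<open>auto simp: I_def\<close>)
  have "(\<Sum>i\<in>I. \<Sum>S\<in>Pow I. u S * v (flip i S)) \<le> (\<Sum>i\<in>I. \<Sum>S\<in>Pow I. w S * w (flip i S))"
  proof (rule sum_mono)
    fix i assume i: "i \<in> I"
    have sf: "(\<Sum>S\<in>Pow I. v S * u (flip i S)) = (\<Sum>S\<in>Pow I. u S * v (flip i S))"
      using sum_flip[OF i, of "\<lambda>S. v S * u (flip i S)"] by (simp add: mult.commute)
    have "(\<Sum>S\<in>Pow I. u S * v (flip i S)) = (\<Sum>S\<in>Pow I. (u S * v (flip i S) + v S * u (flip i S)) / 2)"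
      unfolding sum_divide_distrib[symmetric] sum.distrib sf by simp
    also have "\<dots> \<le> (\<Sum>S\<in>Pow I. w S * w (flip i S))"
    proof (rule sum_mono)
      fix S
      have "0 \<le> u S * u (flip i S) + v S * v (flip i S)" using u0 v0 by (simp add: add_nonneg_nonneg)
      then show "(u S * v (flip i S) + v S * u (flip i S)) / 2 \<le> w S * w (flip i S)"
        unfolding w_def by (simp add: algebra_simps)
    qed
    finally show "(\<Sum>S\<in>Pow I. u S * v (flip i S)) \<le> (\<Sum>S\<in>Pow I. w S * w (flip i S))" .
  qed
  then show ?thesis using Q unfolding I_def by simp
qed

definition Xr :: "nat \<Rightarrow> (nat set \<Rightarrow> real) \<Rightarrow> nat set \<Rightarrow> real" where
  "Xr N f = (\<lambda>S. \<Sum>i<N. f (flip i S))"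

definition ssq :: "nat \<Rightarrow> (nat set \<Rightarrow> real) \<Rightarrow> real" where
  "ssq N f = (\<Sum>S\<in>Pow {..<N}. (f S)^2)"

definition supp :: "nat \<Rightarrow> (nat set \<Rightarrow> real) \<Rightarrow> nat set set" where
  "supp N f = {S\<in>Pow {..<N}. f S \<noteq> 0}"

definition par :: "nat \<Rightarrow> bool \<Rightarrow> (nat set \<Rightarrow> real) \<Rightarrow> bool" where
  "par N e f = (\<forall>S\<in>Pow {..<N}. f S \<noteq> 0 \<longrightarrow> even (card S) = e)"

lemma ssq_nonneg: "0 \<le> ssq N f" unfolding ssq_def by (simp add: sum_nonneg)

lemma Xr_nonneg: "(\<And>S. 0 \<le> f S) \<Longrightarrow> 0 \<le> Xr N f S"
  unfolding Xr_def by (simp add: sum_nonneg)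

lemma Xr_nz: assumes "Xr N f S \<noteq> 0" shows "\<exists>i<N. f (flip i S) \<noteq> 0"
proof (rule ccontr)
  assume "\<not> ?thesis"
  then have "Xr N f S = 0" unfolding Xr_def by (intro sum.neutral) auto
  with assms show False by simp
qed

lemma flip_in: "i < N \<Longrightarrow> S \<in> Pow {..<N} \<Longrightarrow> flip i S \<in> Pow {..<N}"
  using flip_Pow[of i "{..<N}" S] by simp

lemma Xr_supp: "card (supp N (Xr N f)) \<le> N * card (supp N f)"
proof -
  have sub: "supp N (Xr N f) \<subseteq> (\<Union>i\<in>{..<N}. flip i ` supp N f)"
  proof
    fix S assume S: "S \<in> supp N (Xr N f)"
    then obtain i where i: "i < N" "f (flip i S) \<noteq> 0" using Xr_nz unfolding supp_def by blast
    have "flip i S \<in> supp N f" using i S flip_in unfolding supp_def by auto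
    then have "flip i (flip i S) \<in> flip i ` supp N f" by blast
    then show "S \<in> (\<Union>i\<in>{..<N}. flip i ` supp N f)" using i by auto
  qed
  have fin: "finite (supp N f)" unfolding supp_def by simp
  have "card (supp N (Xr N f)) \<le> card (\<Union>i\<in>{..<N}. flip i ` supp N f)"
    by (rule card_mono[OF _ sub]) (use fin in auto)
  also have "\<dots> \<le> (\<Sum>i<N. card (flip i ` supp N f))" by (rule card_UN_le) simp
  also have "\<dots> \<le> (\<Sum>i<N. card (supp N f))" by (intro sum_mono card_image_le fin)
  finally show ?thesis by simp
qed

lemma card_flip: assumes "finite S" shows "even (card (flip i S)) = odd (card S)"
proof (cases "i \<in> S")
  case True
  then have "card (flip i S) = card S - 1" "card S \<ge> 1" unfolding flip_eq using assms
    by (auto simp: Suc_le_eq card_gt_0_iff)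
  then show ?thesis by (metis One_nat_def Suc_diff_le diff_Suc_1 even_Suc)
next
  case False
  then have "card (flip i S) = Suc (card S)" unfolding flip_eq using assms by simp
  then show ?thesis by simp
qed

lemma Xr_par: assumes "par N e f" shows "par N (\<not> e) (Xr N f)"
  unfolding par_def
proof (intro ballI impI)
  fix S assume S: "S \<in> Pow {..<N}" and nz: "Xr N f S \<noteq> 0"
  then obtain i where i: "i < N" "f (flip i S) \<noteq> 0" using Xr_nz by blast
  have "even (card (flip i S)) = e" using assms i flip_in[OF i(1) S] unfolding par_def by auto
  moreover have "finite S" using S finite_subset by auto
  ultimately show "even (card S) = (\<not> e)" using card_flip by auto
qed

lemma Xr_sum: "(\<Sum>i<N. \<Sum>S\<in>Pow {..<N}. u S * v (flip i S)) = (\<Sum>S\<in>Pow {..<N}. u S * Xr N v S)"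
  unfolding Xr_def by (simp add: sum_distrib_left sum.swap[of _ "{..<N}"])

lemma Xr_zero: assumes "\<forall>S\<in>Pow {..<N}. f S = 0" shows "\<forall>S\<in>Pow {..<N}. Xr N f S = 0"
  using assms flip_in unfolding Xr_def by (auto intro!: sum.neutral)

lemma ssq_zero: "ssq N f = 0 \<Longrightarrow> \<forall>S\<in>Pow {..<N}. f S = 0"
  unfolding ssq_def by (subst (asm) sum_nonneg_eq_0_iff) auto

lemma step:
  fixes f :: "nat set \<Rightarrow> real" and a b s :: real
  assumes f0: "\<And>S. 0 \<le> f S" and pf: "par N e f"
    and ca: "real (card (supp N f)) \<le> a" and cb: "real (card (supp N (Xr N f))) \<le> b"
    and s: "0 < s" "s \<le> 1" and bound: "1 + log 2 a / 2 + log 2 b / 2 \<le> real N * s"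
  shows "sqrt (ssq N (Xr N f)) \<le> real N * tau s * sqrt (ssq N f)"
proof -
  define n0 where "n0 = sqrt (ssq N f)"
  define n1 where "n1 = sqrt (ssq N (Xr N f))"
  have t0: "0 \<le> tau s" using tau_nonneg s by simp
  show ?thesis
  proof (cases "n1 = 0")
    case True then show ?thesis unfolding n1_def using t0 ssq_nonneg[of N f] by simp
  next
    case False
    show ?thesis
    proof (cases "n0 = 0")
      case True
      then have "\<forall>S\<in>Pow {..<N}. Xr N f S = 0" using ssq_zero Xr_zero unfolding n0_def by simp
      then have "n1 = 0" unfolding n1_def ssq_def by simp
      then show ?thesis using False by simp
    next
      case n0nz: False
      have n0p: "n0 > 0" using n0nz ssq_nonneg[of N f] unfolding n0_def by (simp add: order_le_less)
      have n1p: "n1 > 0" using False ssq_nonneg[of N "Xr N f"] unfolding n1_def by (simp add: order_le_less)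
      define u where "u S = Xr N f S / n1" for S
      define v where "v S = f S / n0" for S
      have u0: "0 \<le> u S" for S unfolding u_def using Xr_nonneg[OF f0] n1p by simp
      have v0: "0 \<le> v S" for S unfolding v_def using f0 n0p by simp
      have un: "(\<Sum>S\<in>Pow {..<N}. (u S)^2) = 1"
      proof -
        have "(\<Sum>S\<in>Pow {..<N}. (u S)^2) = ssq N (Xr N f) / n1^2"
          unfolding u_def ssq_def by (simp add: power_divide sum_divide_distrib)
        also have "n1^2 = ssq N (Xr N f)" unfolding n1_def using ssq_nonneg by simp
        finally show ?thesis using n1p unfolding n1_def by simp
      qed
      have vn: "(\<Sum>S\<in>Pow {..<N}. (v S)^2) = 1"
      proof -
        have "(\<Sum>S\<in>Pow {..<N}. (v S)^2) = ssq N f / n0^2"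
          unfolding v_def ssq_def by (simp add: power_divide sum_divide_distrib)
        also have "n0^2 = ssq N f" unfolding n0_def using ssq_nonneg by simp
        finally show ?thesis using n0p unfolding n0_def by simp
      qed
      have disj: "u S = 0 \<or> v S = 0" if "S \<in> Pow {..<N}" for S
        using pf Xr_par[OF pf] that unfolding par_def u_def v_def by auto
      have suppu: "{S\<in>Pow {..<N}. u S \<noteq> 0} = supp N (Xr N f)" unfolding supp_def u_def using n1p by auto
      have suppv: "{S\<in>Pow {..<N}. v S \<noteq> 0} = supp N f" unfolding supp_def v_def using n0p by auto
      have B: "(\<Sum>i<N. \<Sum>S\<in>Pow {..<N}. u S * v (flip i S)) \<le> real N * tau s"
      proof -
        have bound': "1 + log 2 b / 2 + log 2 a / 2 \<le> real N * s" using bound by linarith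
        show ?thesis by (rule bil[OF u0 v0 un vn disj _ _ s bound']) (use ca cb suppu suppv in auto)
      qed
      have "(\<Sum>i<N. \<Sum>S\<in>Pow {..<N}. u S * v (flip i S)) = (\<Sum>S\<in>Pow {..<N}. u S * Xr N v S)"
        by (rule Xr_sum)
      also have "\<dots> = (\<Sum>S\<in>Pow {..<N}. (Xr N f S)^2) / (n1 * n0)"
        unfolding u_def v_def Xr_def by (simp add: sum_divide_distrib[symmetric] power2_eq_square)
      also have "\<dots> = n1 / n0"
      proof -
        have "(\<Sum>S\<in>Pow {..<N}. (Xr N f S)^2) = n1^2" unfolding n1_def ssq_def using ssq_nonneg[unfolded ssq_def] by simp
        then show ?thesis using n1p by (simp add: power2_eq_square)
      qed
      finally have "n1 / n0 \<le> real N * tau s" using B by simp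
      then have "n1 \<le> real N * tau s * n0" using n0p by (simp add: divide_le_eq)
      then show ?thesis unfolding n0_def n1_def .
    qed
  qed
qed

definition sig :: "nat \<Rightarrow> nat \<Rightarrow> nat \<Rightarrow> real" where
  "sig n0 N k = (log 2 (real n0) + (real k + 1/2) * log 2 (real N) + 1) / real N"

lemma iter_facts:
  assumes f0: "\<And>S. 0 \<le> f S" and pf: "par N e f" and cf: "card (supp N f) \<le> n0"
  shows "(\<forall>S. 0 \<le> (Xr N ^^ k) f S) \<and> par N (if even k then e else \<not> e) ((Xr N ^^ k) f)
     \<and> card (supp N ((Xr N ^^ k) f)) \<le> n0 * N ^ k"
proof (induction k)
  case 0
  then show ?case using f0 pf cf by simp
next
  case (Suc k)
  have a: "\<forall>S. 0 \<le> (Xr N ^^ Suc k) f S" using Suc Xr_nonneg by simp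
  have b: "par N (if even (Suc k) then e else \<not> e) ((Xr N ^^ Suc k) f)"
    using Xr_par[of N "if even k then e else \<not> e" "(Xr N ^^ k) f"] Suc by (auto split: if_splits)
  have "card (supp N ((Xr N ^^ Suc k) f)) \<le> N * card (supp N ((Xr N ^^ k) f))"
    using Xr_supp by simp
  also have "\<dots> \<le> N * (n0 * N ^ k)" using Suc by simp
  finally have c: "card (supp N ((Xr N ^^ Suc k) f)) \<le> n0 * N ^ Suc k" by (simp add: algebra_simps)
  show ?case using a b c by blast
qed

lemma chain:
  assumes N: "N > 0" and n0: "n0 \<ge> 1"
    and f0: "\<And>S. 0 \<le> f S" and pf: "par N e f" and cf: "card (supp N f) \<le> n0"
  shows "(\<forall>k<K. 0 < sig n0 N k \<and> sig n0 N k \<le> 1) \<Longrightarrow>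
    sqrt (ssq N ((Xr N ^^ K) f)) \<le> (\<Prod>k<K. real N * tau (sig n0 N k)) * sqrt (ssq N f)"
proof (induction K)
  case 0
  then show ?case by simp
next
  case (Suc K)
  let ?g = "(Xr N ^^ K) f"
  have IH: "sqrt (ssq N ?g) \<le> (\<Prod>k<K. real N * tau (sig n0 N k)) * sqrt (ssq N f)" using Suc by auto
  have sK: "0 < sig n0 N K" "sig n0 N K \<le> 1" using Suc.prems by auto
  note F = iter_facts[OF f0 pf cf, of K]
  note F' = iter_facts[OF f0 pf cf, of "Suc K"]
  have cg: "real (card (supp N ?g)) \<le> real n0 * real N ^ K"
    using F by (metis of_nat_le_iff of_nat_mult of_nat_power)
  have cg': "real (card (supp N (Xr N ?g))) \<le> real n0 * real N ^ Suc K"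
    using F' by (simp del: of_nat_le_iff) (metis of_nat_le_iff of_nat_mult of_nat_power)
  have bound: "1 + log 2 (real n0 * real N ^ K) / 2 + log 2 (real n0 * real N ^ Suc K) / 2 \<le> real N * sig n0 N K"
  proof -
    have p: "real n0 > 0" "real N > 0" using n0 N by auto
    have "log 2 (real n0 * real N ^ K) = log 2 (real n0) + K * log 2 (real N)"
      using p by (simp add: log_mult_pos log_nat_power)
    moreover have "log 2 (real n0 * real N ^ Suc K) = log 2 (real n0) + Suc K * log 2 (real N)"
      using p by (simp add: log_mult_pos log_nat_power del: power_Suc)
    moreover have "real N * sig n0 N K = log 2 (real n0) + (real K + 1/2) * log 2 (real N) + 1"
      unfolding sig_def using p by simp
    ultimately show ?thesis by (simp add: algebra_simps add_divide_distrib)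
  qed
  have st: "sqrt (ssq N (Xr N ?g)) \<le> real N * tau (sig n0 N K) * sqrt (ssq N ?g)"
    by (rule step[OF _ _ cg cg' sK bound]) (use F in blast)+
  have t0: "0 \<le> real N * tau (sig n0 N K)" using tau_nonneg sK by simp
  have "sqrt (ssq N ((Xr N ^^ Suc K) f)) \<le> real N * tau (sig n0 N K) * sqrt (ssq N ?g)" using st by simp
  also have "\<dots> \<le> real N * tau (sig n0 N K) * ((\<Prod>k<K. real N * tau (sig n0 N k)) * sqrt (ssq N f))"
    by (rule mult_left_mono[OF IH t0])
  finally show ?case by (simp add: algebra_simps)
qed

lemma Xr_add: "Xr N (\<lambda>S. g S + h S) = (\<lambda>S. Xr N g S + Xr N h S)"
  unfolding Xr_def by (simp add: sum.distrib)

lemma Xr_iter_add: "(Xr N ^^ k) (\<lambda>S. g S + h S) = (\<lambda>S. (Xr N ^^ k) g S + (Xr N ^^ k) h S)"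
  by (induction k) (simp_all add: Xr_add)

lemma real_main:
  assumes N: "N > 0" and n0: "n0 \<ge> 1"
    and f0: "\<And>S. 0 \<le> f S" and fn: "ssq N f = 1" and cf: "card (supp N f) \<le> n0"
    and sg: "\<forall>k<K. 0 < sig n0 N k \<and> sig n0 N k \<le> 1"
  shows "ssq N ((Xr N ^^ K) f) \<le> (\<Prod>k<K. real N * tau (sig n0 N k))^2"
proof -
  let ?P = "\<Prod>k<K. real N * tau (sig n0 N k)"
  have P0: "0 \<le> ?P" using sg tau_nonneg by (intro prod_nonneg) auto
  define fe where "fe S = (if even (card S) then f S else 0)" for S
  define fo where "fo S = (if even (card S) then 0 else f S)" for S
  have fsplit: "f = (\<lambda>S. fe S + fo S)" unfolding fe_def fo_def by auto
  have pe: "par N True fe" unfolding par_def fe_def by auto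
  have po: "par N False fo" unfolding par_def fo_def by auto
  have fe0: "0 \<le> fe S" for S unfolding fe_def using f0 by simp
  have fo0: "0 \<le> fo S" for S unfolding fo_def using f0 by simp
  have ce: "card (supp N fe) \<le> n0"
  proof -
    have "supp N fe \<subseteq> supp N f" unfolding supp_def fe_def by auto
    moreover have "finite (supp N f)" unfolding supp_def by simp
    ultimately have "card (supp N fe) \<le> card (supp N f)" by (rule card_mono[rotated])
    then show ?thesis using cf by simp
  qed
  have co: "card (supp N fo) \<le> n0"
  proof -
    have "supp N fo \<subseteq> supp N f" unfolding supp_def fo_def by auto
    moreover have "finite (supp N f)" unfolding supp_def by simp
    ultimately have "card (supp N fo) \<le> card (supp N f)" by (rule card_mono[rotated])
    then show ?thesis using cf by simp
  qed
  have sqb: "ssq N ((Xr N ^^ K) g) \<le> ?P^2 * ssq N g"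
    if "sqrt (ssq N ((Xr N ^^ K) g)) \<le> ?P * sqrt (ssq N g)" for g
  proof -
    have "(sqrt (ssq N ((Xr N ^^ K) g)))^2 \<le> (?P * sqrt (ssq N g))^2"
      using that ssq_nonneg by (intro power_mono) auto
    then show ?thesis using ssq_nonneg by (simp add: power_mult_distrib)
  qed
  have be: "ssq N ((Xr N ^^ K) fe) \<le> ?P^2 * ssq N fe"
    by (rule sqb, rule chain[OF N n0 fe0 pe ce sg])
  have bo: "ssq N ((Xr N ^^ K) fo) \<le> ?P^2 * ssq N fo"
    by (rule sqb, rule chain[OF N n0 fo0 po co sg])
  have orth: "ssq N (\<lambda>S. g S + h S) = ssq N g + ssq N h"
    if "par N e1 g" "par N (\<not> e1) h" for g h e1
  proof -
    have "g S * h S = 0" if "S \<in> Pow {..<N}" for S using that \<open>par N e1 g\<close> \<open>par N (\<not> e1) h\<close>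
      unfolding par_def by auto
    then have "(g S + h S)^2 = (g S)^2 + (h S)^2" if "S \<in> Pow {..<N}" for S
      using that by (simp add: power2_sum mult.assoc)
    then have "ssq N (\<lambda>S. g S + h S) = (\<Sum>S\<in>Pow {..<N}. (g S)^2 + (h S)^2)"
      unfolding ssq_def by (intro sum.cong) auto
    then show ?thesis unfolding ssq_def by (simp add: sum.distrib)
  qed
  have it_par: "par N (if even K then e1 else \<not> e1) ((Xr N ^^ K) g)" if "par N e1 g" "\<And>S. 0 \<le> g S"
      "card (supp N g) \<le> n0" for g e1
    using iter_facts[OF that(2) that(1) that(3), of K] by blast
  have "ssq N ((Xr N ^^ K) f) = ssq N ((Xr N ^^ K) fe) + ssq N ((Xr N ^^ K) fo)"
    unfolding fsplit Xr_iter_add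
    by (rule orth[of "if even K then True else False"]) (use it_par[OF pe fe0 ce] it_par[OF po fo0 co] in auto)
  also have "\<dots> \<le> ?P^2 * ssq N fe + ?P^2 * ssq N fo" using be bo by simp
  also have "\<dots> = ?P^2 * ssq N f"
    using orth[OF pe, of fo] po by (simp add: fsplit algebra_simps)
  finally show ?thesis using fn by simp
qed

lemma Xop_flip: "Xop N f S = (\<Sum>i<N. f (flip i S))"
  unfolding Xop_def flip_def ..

lemma XN_pow: "(XN N ^^ k) \<psi> = (\<lambda>S. (Xop N ^^ k) \<psi> S / of_nat N ^ k)"
proof (induction k)
  case 0 then show ?case by simp
next
  case (Suc k)
  have "(XN N ^^ Suc k) \<psi> = XN N ((XN N ^^ k) \<psi>)" by simp
  also have "\<dots> = XN N (\<lambda>S. (Xop N ^^ k) \<psi> S / of_nat N ^ k)" by (simp only: Suc)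
  also have "\<dots> = (\<lambda>S. (Xop N ^^ Suc k) \<psi> S / of_nat N ^ Suc k)"
  proof (rule ext)
    fix S
    show "XN N (\<lambda>S. (Xop N ^^ k) \<psi> S / of_nat N ^ k) S = (Xop N ^^ Suc k) \<psi> S / of_nat N ^ Suc k"
      unfolding XN_def funpow.simps comp_def Xop_flip
      by (simp add: sum_divide_distrib[symmetric] mult.commute)
  qed
  finally show ?case .
qed

lemma cmod_iter: "cmod ((Xop N ^^ k) \<psi> S) \<le> (Xr N ^^ k) (\<lambda>S. cmod (\<psi> S)) S"
proof (induction k arbitrary: S)
  case 0 then show ?case by simp
next
  case (Suc k)
  have "cmod ((Xop N ^^ Suc k) \<psi> S) = cmod (\<Sum>i<N. (Xop N ^^ k) \<psi> (flip i S))" by (simp add: Xop_flip)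
  also have "\<dots> \<le> (\<Sum>i<N. cmod ((Xop N ^^ k) \<psi> (flip i S)))" by (rule norm_sum)
  also have "\<dots> \<le> (\<Sum>i<N. (Xr N ^^ k) (\<lambda>S. cmod (\<psi> S)) (flip i S))" by (intro sum_mono Suc.IH)
  also have "\<dots> = (Xr N ^^ Suc k) (\<lambda>S. cmod (\<psi> S)) S" by (simp add: Xr_def)
  finally show ?case .
qed

lemma XN_adj: "qinner N f (XN N g) = qinner N (XN N f) g"
proof -
  have "qinner N f (XN N g) = (\<Sum>i<N. \<Sum>S\<in>Pow {..<N}. cnj (f S) * g (flip i S)) / of_nat N"
    unfolding qinner_def XN_def basis_def Xop_flip
    by (simp add: sum_divide_distrib[symmetric] sum_distrib_left sum.swap[of _ "{..<N}"])
  also have "\<dots> = (\<Sum>i<N. \<Sum>S\<in>Pow {..<N}. cnj (f (flip i S)) * g S) / of_nat N"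
  proof -
    have "(\<Sum>S\<in>Pow {..<N}. cnj (f S) * g (flip i S)) = (\<Sum>S\<in>Pow {..<N}. cnj (f (flip i S)) * g S)"
      if "i < N" for i
      using sum_flip[of i "{..<N}" "\<lambda>S. cnj (f (flip i S)) * g S"] that by simp
    then show ?thesis by simp
  qed
  also have "\<dots> = (\<Sum>S\<in>Pow {..<N}. \<Sum>i<N. cnj (f (flip i S)) * g S) / of_nat N"
    by (simp only: sum.swap[of _ "{..<N}"])
  also have "\<dots> = qinner N (XN N f) g"
    unfolding qinner_def XN_def basis_def Xop_flip
    by (simp add: sum_divide_distrib[symmetric] sum_distrib_right)
  finally show ?thesis .
qed

lemma XN_adj_pow: "qinner N f ((XN N ^^ (a + b)) g) = qinner N ((XN N ^^ a) f) ((XN N ^^ b) g)"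
proof (induction a arbitrary: f)
  case 0 then show ?case by simp
next
  case (Suc a)
  have "qinner N f ((XN N ^^ (Suc a + b)) g) = qinner N f (XN N ((XN N ^^ (a + b)) g))" by simp
  also have "\<dots> = qinner N (XN N f) ((XN N ^^ (a + b)) g)" by (rule XN_adj)
  also have "\<dots> = qinner N ((XN N ^^ a) (XN N f)) ((XN N ^^ b) g)" by (rule Suc.IH)
  also have "(XN N ^^ a) (XN N f) = (XN N ^^ Suc a) f" by (simp add: funpow_Suc_right del: funpow.simps)
  finally show ?case .
qed

lemma qinner_self: "qinner N h h = complex_of_real (\<Sum>S\<in>basis N. (cmod (h S))^2)"
  unfolding qinner_def of_real_sum by (intro sum.cong refl) (subst complex_norm_square, simp add: mult.commute)

theorem mainTheorem6:
  fixes N K n0 :: nat and \<psi> :: qstate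
  assumes "N > 0" and "K > 0"
    and "qnorm N \<psi> = 1"
    and "card (qsupport N \<psi>) \<le> n0"
  shows "((\<forall>i<K. 0 \<le> (log 2 (real n0) + (real i + 1/2) * log 2 (real N) + 1) / real N
                 \<and> (log 2 (real n0) + (real i + 1/2) * log 2 (real N) + 1) / real N \<le> 1) \<longrightarrow>
           Im (qinner N \<psi> ((XN N ^^ (2*K)) \<psi>)) = 0 \<and>
           Re (qinner N \<psi> ((XN N ^^ (2*K)) \<psi>))
             \<le> (\<Prod>i<K. (tau ((log 2 (real n0) + (real i + 1/2) * log 2 (real N) + 1) / real N))\<^sup>2))
       \<and> ((0 \<le> log 2 (real n0) / real N + ((real K + 1/2) * log 2 (real N) + 1) / real N
            \<and> log 2 (real n0) / real N + ((real K + 1/2) * log 2 (real N) + 1) / real N \<le> 1) \<longrightarrow>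
           qnorm N ((XN N ^^ K) \<psi>)
             \<le> (tau (log 2 (real n0) / real N + ((real K + 1/2) * log 2 (real N) + 1) / real N)) ^ K)"
proof -
  note N = assms(1)
  have Nr: "real N \<ge> 1" using N by simp
  have logN: "log 2 (real N) \<ge> 0" using Nr by simp
  have finB: "finite (basis N)" unfolding basis_def by simp
  have n0: "n0 \<ge> 1"
  proof (rule ccontr)
    assume "\<not> n0 \<ge> 1"
    then have "card (qsupport N \<psi>) = 0" using assms(4) by simp
    moreover have "finite (qsupport N \<psi>)" using finB unfolding qsupport_def by simp
    ultimately have "qsupport N \<psi> = {}" by simp
    then have "\<forall>S\<in>basis N. \<psi> S = 0" unfolding qsupport_def by auto
    then have "qnorm N \<psi> = 0" unfolding qnorm_def by simp
    then show False using assms(3) by simp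
  qed
  have logn0: "log 2 (real n0) \<ge> 0" using n0 by simp
  define f where "f S = cmod (\<psi> S)" for S
  have f0: "0 \<le> f S" for S unfolding f_def by simp
  have fn: "ssq N f = 1"
  proof -
    have "sqrt (ssq N f) = 1" using assms(3) unfolding qnorm_def ssq_def f_def basis_def .
    then show ?thesis by simp
  qed
  have cf: "card (supp N f) \<le> n0"
  proof -
    have "supp N f = qsupport N \<psi>" unfolding supp_def qsupport_def f_def basis_def by simp
    then show ?thesis using assms(4) by simp
  qed
  have spos: "0 < sig n0 N k" for k
  proof -
    have "0 \<le> (real k + 1/2) * log 2 (real N)" using logN by simp
    then have "0 < log 2 (real n0) + (real k + 1/2) * log 2 (real N) + 1" using logn0 by linarith
    then show ?thesis unfolding sig_def using N by simp
  qed
  have core: "(\<Sum>S\<in>basis N. (cmod ((XN N ^^ K) \<psi> S))^2) \<le> (\<Prod>k<K. (tau (sig n0 N k))^2)"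
    if sg1: "\<forall>k<K. sig n0 N k \<le> 1"
  proof -
    have sg: "\<forall>k<K. 0 < sig n0 N k \<and> sig n0 N k \<le> 1" using sg1 spos by auto
    have rm: "ssq N ((Xr N ^^ K) f) \<le> (\<Prod>k<K. real N * tau (sig n0 N k))^2"
      by (rule real_main[OF N n0 f0 fn cf sg])
    have Np: "real N ^ (2 * K) > 0" using N by simp
    have "(\<Sum>S\<in>basis N. (cmod ((XN N ^^ K) \<psi> S))^2) = (\<Sum>S\<in>basis N. (cmod ((Xop N ^^ K) \<psi> S))^2) / real N ^ (2 * K)"
      unfolding XN_pow by (simp add: norm_divide norm_power power_divide sum_divide_distrib power_mult[symmetric] mult.commute)
    also have "\<dots> \<le> ssq N ((Xr N ^^ K) f) / real N ^ (2 * K)"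
      unfolding ssq_def basis_def f_def
      by (intro divide_right_mono sum_mono power_mono cmod_iter) auto
    also have "\<dots> \<le> (\<Prod>k<K. real N * tau (sig n0 N k))^2 / real N ^ (2 * K)"
      by (intro divide_right_mono rm) simp
    also have "(\<Prod>k<K. real N * tau (sig n0 N k))^2 = real N ^ (2 * K) * (\<Prod>k<K. (tau (sig n0 N k))^2)"
      by (simp add: prod.distrib power_mult_distrib prod_power_distrib power_mult[symmetric] mult.commute)
    finally show ?thesis using Np N by simp
  qed
  have inner: "qinner N \<psi> ((XN N ^^ (2*K)) \<psi>) = complex_of_real (\<Sum>S\<in>basis N. (cmod ((XN N ^^ K) \<psi> S))^2)"
  proof -
    have "2 * K = K + K" by simp
    then have "qinner N \<psi> ((XN N ^^ (2*K)) \<psi>) = qinner N ((XN N ^^ K) \<psi>) ((XN N ^^ K) \<psi>)"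
      using XN_adj_pow by metis
    then show ?thesis using qinner_self by simp
  qed
  have sigeq: "sig n0 N k = (log 2 (real n0) + (real k + 1/2) * log 2 (real N) + 1) / real N" for k
    unfolding sig_def ..
  have P1: "(\<forall>i<K. 0 \<le> sig n0 N i \<and> sig n0 N i \<le> 1) \<longrightarrow>
      Im (qinner N \<psi> ((XN N ^^ (2*K)) \<psi>)) = 0 \<and>
      Re (qinner N \<psi> ((XN N ^^ (2*K)) \<psi>)) \<le> (\<Prod>i<K. (tau (sig n0 N i))\<^sup>2)"
    using core unfolding inner by auto
  have P2: "(0 \<le> sig n0 N K \<and> sig n0 N K \<le> 1) \<longrightarrow> qnorm N ((XN N ^^ K) \<psi>) \<le> (tau (sig n0 N K)) ^ K"
  proof
    assume h: "0 \<le> sig n0 N K \<and> sig n0 N K \<le> 1"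
    have le: "sig n0 N k \<le> sig n0 N K" if "k < K" for k
    proof -
      have "(real k + 1/2) * log 2 (real N) \<le> (real K + 1/2) * log 2 (real N)"
        using that logN by (intro mult_right_mono) auto
      then show ?thesis unfolding sig_def using N by (intro divide_right_mono) auto
    qed
    have c: "(\<Sum>S\<in>basis N. (cmod ((XN N ^^ K) \<psi> S))^2) \<le> (\<Prod>k<K. (tau (sig n0 N k))^2)"
      using core le h by force
    have t0: "0 \<le> tau (sig n0 N k)" if "k < K" for k using tau_nonneg spos le[OF that] h
      by (meson less_imp_le order_trans)
    have "qnorm N ((XN N ^^ K) \<psi>) \<le> sqrt (\<Prod>k<K. (tau (sig n0 N k))^2)"
      unfolding qnorm_def using c by simp
    also have "\<dots> = (\<Prod>k<K. tau (sig n0 N k))"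
    proof -
      have "0 \<le> (\<Prod>k<K. tau (sig n0 N k))" using t0 by (intro prod_nonneg) auto
      then show ?thesis by (simp add: prod_power_distrib[symmetric])
    qed
    also have "\<dots> \<le> (\<Prod>k<K. tau (sig n0 N K))"
      by (intro prod_mono conjI t0 tau_mono) (use spos le h in \<open>auto intro: less_imp_le\<close>)
    also have "\<dots> = (tau (sig n0 N K)) ^ K" by simp
    finally show "qnorm N ((XN N ^^ K) \<psi>) \<le> (tau (sig n0 N K)) ^ K" .
  qed
  have sK: "log 2 (real n0) / real N + ((real K + 1/2) * log 2 (real N) + 1) / real N
      = (log 2 (real n0) + (real K + 1/2) * log 2 (real N) + 1) / real N"
    by (simp add: add_divide_distrib)
  show ?thesis unfolding sK using P1 P2 unfolding sigeq by blast
qed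

end
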